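(* Let $k<\omega$ and let $\chi$ be an infinite cardinal with $\chi^{\aleph_0}=\chi$. For $\ell\le k$ let $S_\ell=\beth_\ell(\chi)$ (as a set of ordinals), and let $\Lambda=\prod_{\ell\le k}{}^\omega(S_\ell)$. Then there is a family $\langle\alpha_{\bar\eta,m,n}:\bar\eta\in\Lambda,\ m\le k,\ n<\omega\rangle$ of ordinals $\alpha_{\bar\eta,m,n}<\chi$ such that for every function $h:\Lambda_{\le k}\to\chi$ and every sequence $\langle\gamma_\ell:\ell\le k\rangle$ with $\gamma_\ell<\beth_\ell(\chi)$, there is $\bar\eta\in\Lambda$ with $\eta_\ell(0)=\gamma_\ell$ for all $\ell\le k$ and $h(\bar\eta\upharpoonleft\langle m,n\rangle)=\alpha_{\bar\eta,m,n}$ for all $m\le k$ and $n<\omega$.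
   Context: $\beth_0(\chi)=\chi$, $\beth_{\ell+1}(\chi)=2^{\beth_\ell(\chi)}$. For a set $X$, ${}^\omega X$ is the set of functions $\omega\to X$; $\Lambda$ consists of sequences $\bar\eta=\langle\eta_0,\dots,\eta_k\rangle$ with $\eta_\ell\in{}^\omega(S_\ell)$. For $\bar\eta\in\Lambda$, $m\le k$, $n<\omega$, $\bar\eta\upharpoonleft\langle m,n\rangle$ is the sequence obtained from $\bar\eta$ by replacing $\eta_m$ with its restriction $\eta_m\restriction n$ (a finite sequence). $\Lambda_m=\{\bar\eta\upharpoonleft\langle m,n\rangle:\bar\eta\in\Lambda,n<\omega\}$ and $\Lambda_{\le k}=\bigcup_{m\le k}\Lambda_m$. *)

theory Defs
  imports Main "HOL-Library.Equipollence"
begin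

text \<open>A sequence eta-bar = (eta_0,...,eta_k) is a function eta :: nat => nat => 'a,
  eta l being the omega-sequence eta_l.  Lambda = prod_{l<=k} omega(S_l).\<close>
definition Lam :: "nat \<Rightarrow> (nat \<Rightarrow> 'a set) \<Rightarrow> (nat \<Rightarrow> nat \<Rightarrow> 'a) set" where
  "Lam k S = (\<Pi>\<^sub>E l\<in>{..k}. (UNIV :: nat set) \<rightarrow> S l)"

text \<open>eta-bar restricted at <m,n>: coordinate m replaced by the finite sequence
  eta_m|n (a list); encoded as (m, eta_m|n, the other coordinates).\<close>
definition restr :: "(nat \<Rightarrow> nat \<Rightarrow> 'a) \<Rightarrow> nat \<Rightarrow> nat \<Rightarrow> nat \<times> 'a list \<times> (nat \<Rightarrow> nat \<Rightarrow> 'a)" where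
  "restr eta m n = (m, map (eta m) [0..<n], eta(m := undefined))"

definition Lam_le :: "nat \<Rightarrow> (nat \<Rightarrow> 'a set) \<Rightarrow> (nat \<times> 'a list \<times> (nat \<Rightarrow> nat \<Rightarrow> 'a)) set" where
  "Lam_le k S = {restr eta m n | eta m n. eta \<in> Lam k S \<and> m \<le> k}"

end

theory Submission imports Defs begin

lemma sq_eqpoll: assumes "infinite (A::'b set)" shows "A \<times> A \<approx> A"
  unfolding eqpoll_iff_card_of_ordIso by (rule card_of_Times_same_infinite[OF assms])

lemma nat_times_lepoll: assumes "infinite (A::'b set)" shows "(UNIV::nat set) \<times> A \<lesssim> A"
proof -
  have "(UNIV::nat set) \<lesssim> A" using assms infinite_le_lepoll by blast
  then have "(UNIV::nat set) \<times> A \<lesssim> A \<times> A" by (rule times_lepoll_mono) simp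
  also have "A \<times> A \<approx> A" using assms by (rule sq_eqpoll)
  finally show ?thesis .
qed

lemma Pow_lepoll_mono: assumes "A \<lesssim> B" shows "Pow A \<lesssim> Pow B"
proof -
  obtain f where f: "inj_on f A" "f ` A \<subseteq> B" using assms unfolding lepoll_def by blast
  have "inj_on (image f) (Pow A)" using f(1) by (rule inj_on_image_Pow)
  moreover have "image f ` Pow A \<subseteq> Pow B" using f(2) by auto
  ultimately show ?thesis unfolding lepoll_def by blast
qed

lemma Pow_eqpoll_cong: "A \<approx> B \<Longrightarrow> Pow A \<approx> Pow B"
  by (meson Pow_lepoll_mono eqpoll_imp_lepoll eqpoll_sym lepoll_antisym)

lemma funcset_Pow_lepoll: "((UNIV::nat set) \<rightarrow> Pow X) \<lesssim> Pow ((UNIV::nat set) \<times> X)"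
proof -
  have "inj_on (\<lambda>f. {(n,x). x \<in> f n}) ((UNIV::nat set) \<rightarrow> Pow X)"
  proof (rule inj_onI)
    fix f g assume "f \<in> (UNIV::nat set) \<rightarrow> Pow X" "g \<in> (UNIV::nat set) \<rightarrow> Pow X" and e: "{(n,x). x \<in> f n} = {(n,x). x \<in> g n}"
    show "f = g"
    proof
      fix n show "f n = g n"
        using e by (auto simp: set_eq_iff)
    qed
  qed
  moreover have "(\<lambda>f. {(n,x). x \<in> f n}) ` ((UNIV::nat set) \<rightarrow> Pow X) \<subseteq> Pow ((UNIV::nat set) \<times> X)"
    by (auto simp: Pi_iff)
  ultimately show ?thesis unfolding lepoll_def by blast
qed

lemma funcset_lepoll_cong: assumes "A \<lesssim> B" shows "((UNIV::nat set) \<rightarrow> A) \<lesssim> ((UNIV::nat set) \<rightarrow> B)"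
proof -
  obtain g where g: "inj_on g A" "g ` A \<subseteq> B" using assms unfolding lepoll_def by blast
  have "inj_on (\<lambda>f. g \<circ> f) ((UNIV::nat set) \<rightarrow> A)"
  proof (rule inj_onI)
    fix f f' assume f: "f \<in> (UNIV::nat set) \<rightarrow> A" and f': "f' \<in> (UNIV::nat set) \<rightarrow> A" and e: "g \<circ> f = g \<circ> f'"
    show "f = f'"
    proof
      fix n
      have "g (f n) = g (f' n)" using e by (simp add: fun_eq_iff)
      moreover have "f n \<in> A" "f' n \<in> A" using f f' by auto
      ultimately show "f n = f' n" using g(1) by (meson inj_onD)
    qed
  qed
  moreover have "(\<lambda>f. g \<circ> f) ` ((UNIV::nat set) \<rightarrow> A) \<subseteq> (UNIV::nat set) \<rightarrow> B" 
  proof (rule image_subsetI)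
    fix f assume "f \<in> (UNIV::nat set) \<rightarrow> A"
    then show "g \<circ> f \<in> (UNIV::nat set) \<rightarrow> B" using g(2) by (simp add: Pi_iff image_subset_iff)
  qed
  ultimately show ?thesis unfolding lepoll_def by blast
qed

lemma graph_lepoll: "(A \<rightarrow>\<^sub>E B) \<lesssim> Pow (A \<times> B)"
proof -
  have "inj_on (\<lambda>f. (\<lambda>d. (d, f d)) ` A) (A \<rightarrow>\<^sub>E B)"
  proof (rule inj_onI)
    fix f g assume f: "f \<in> A \<rightarrow>\<^sub>E B" and g: "g \<in> A \<rightarrow>\<^sub>E B"
      and e: "(\<lambda>d. (d, f d)) ` A = (\<lambda>d. (d, g d)) ` A"
    show "f = g"
    proof
      fix x show "f x = g x"
      proof (cases "x \<in> A")
        case True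
        then have "(x, f x) \<in> (\<lambda>d. (d, g d)) ` A" using e by blast
        then obtain d where d: "(x, f x) = (d, g d)" by blast
        then have "x = d" by (rule Pair_inject)
        moreover have "f x = g d" using d by (rule Pair_inject)
        ultimately show ?thesis by simp
      next
        case False
        have "f x = undefined" using f False by (rule PiE_arb)
        moreover have "g x = undefined" using g False by (rule PiE_arb)
        ultimately show ?thesis by simp
      qed
    qed
  qed
  moreover have "(\<lambda>f. (\<lambda>d. (d, f d)) ` A) ` (A \<rightarrow>\<^sub>E B) \<subseteq> Pow (A \<times> B)"
  proof (rule image_subsetI)
    fix f assume f: "f \<in> A \<rightarrow>\<^sub>E B"
    show "(\<lambda>d. (d, f d)) ` A \<in> Pow (A \<times> B)"
    proof (rule PowI, rule image_subsetI)
      fix d assume "d \<in> A" then show "(d, f d) \<in> A \<times> B" using f by blast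
    qed
  qed
  ultimately show ?thesis unfolding lepoll_def by blast
qed

lemma PiE_Suc_lepoll: "PiE {..<Suc m} T \<lesssim> PiE {..<m} T \<times> T m"
proof -
  have "inj_on (\<lambda>d. (d(m:=undefined), d m)) (PiE {..<Suc m} T)"
  proof (rule inj_onI)
    fix d e assume "d \<in> PiE {..<Suc m} T" "e \<in> PiE {..<Suc m} T"
      and eq: "(d(m:=undefined), d m) = (e(m:=undefined), e m)"
    have e1: "d(m:=undefined) = e(m:=undefined)" using eq by (rule Pair_inject)
    have e2: "d m = e m" using eq by (rule Pair_inject)
    show "d = e"
    proof
      fix x show "d x = e x"
      proof (cases "x = m")
        case True then show ?thesis using e2 by simp
      next
        case False
        have "(d(m:=undefined)) x = (e(m:=undefined)) x" using e1 by (rule fun_cong)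
        then show ?thesis using False by simp
      qed
    qed
  qed
  moreover have "(\<lambda>d. (d(m:=undefined), d m)) ` (PiE {..<Suc m} T) \<subseteq> PiE {..<m} T \<times> T m"
  proof (rule image_subsetI)
    fix d assume d: "d \<in> PiE {..<Suc m} T"
    have "d(m:=undefined) \<in> PiE {..<m} T"
    proof (rule PiE_I)
      fix x assume x: "x \<in> {..<m}"
      then have "d x \<in> T x" using d by (simp add: PiE_iff)
      then show "(d(m:=undefined)) x \<in> T x" using x by simp
    next
      fix x assume x: "x \<notin> {..<m}" show "(d(m:=undefined)) x = undefined"
      proof (cases "x = m")
        case False then have "x \<notin> {..<Suc m}" using x by simp
        then have "d x = undefined" by (rule PiE_arb[OF d])
        then show ?thesis by simp
      qed simp
    qed
    moreover have "d m \<in> T m" using d by (simp add: PiE_iff)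
    ultimately show "(d(m:=undefined), d m) \<in> PiE {..<m} T \<times> T m" by blast
  qed
  ultimately show ?thesis unfolding lepoll_def by blast
qed


lemma inv_lemma:
  fixes S :: "nat \<Rightarrow> 'a set"
  assumes chi_inf: "infinite (S 0)"
    and chi_omega: "((UNIV :: nat set) \<rightarrow> S 0) \<approx> S 0"
    and beth: "\<forall>l<k. S (Suc l) \<approx> Pow (S l)"
  shows "m \<le> k \<Longrightarrow> infinite (S m) \<and> ((UNIV::nat set) \<rightarrow> S m) \<lesssim> S m \<and> S 0 \<lesssim> S m
     \<and> PiE {..<Suc m} (\<lambda>l. (UNIV::nat set) \<rightarrow> S l) \<lesssim> S m"
proof (induction m)
  case 0
  have "PiE {..<Suc 0} (\<lambda>l. (UNIV::nat set) \<rightarrow> S l) \<lesssim> PiE {..<0} (\<lambda>l. (UNIV::nat set) \<rightarrow> S l) \<times> ((UNIV::nat set) \<rightarrow> S 0)"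
    by (rule PiE_Suc_lepoll)
  also have "\<dots> = {\<lambda>_. undefined} \<times> ((UNIV::nat set) \<rightarrow> S 0)" by simp
  also have "\<dots> \<approx> ((UNIV::nat set) \<rightarrow> S 0)" by (rule times_singleton_eqpoll)
  also have "\<dots> \<approx> S 0" by (rule chi_omega)
  finally show ?case using chi_inf chi_omega eqpoll_imp_lepoll by blast
next
  case (Suc m)
  then have IH: "infinite (S m)" "((UNIV::nat set) \<rightarrow> S m) \<lesssim> S m" "S 0 \<lesssim> S m"
     "PiE {..<Suc m} (\<lambda>l. (UNIV::nat set) \<rightarrow> S l) \<lesssim> S m" by auto
  have E: "S (Suc m) \<approx> Pow (S m)" using beth Suc.prems by auto
  then have E': "Pow (S m) \<approx> S (Suc m)" by (rule eqpoll_sym)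
  have inf: "infinite (S (Suc m))" using E IH(1) eqpoll_finite_iff by auto
  have le: "S m \<lesssim> S (Suc m)" using lepoll_Pow_self E' by (rule lepoll_trans2)
  have "((UNIV::nat set) \<rightarrow> S (Suc m)) \<lesssim> ((UNIV::nat set) \<rightarrow> Pow (S m))"
    using E by (intro funcset_lepoll_cong eqpoll_imp_lepoll)
  also have "\<dots> \<lesssim> Pow ((UNIV::nat set) \<times> S m)" by (rule funcset_Pow_lepoll)
  also have "\<dots> \<lesssim> Pow (S m)" using IH(1) by (intro Pow_lepoll_mono nat_times_lepoll)
  also have "\<dots> \<approx> S (Suc m)" by (rule E')
  finally have T: "((UNIV::nat set) \<rightarrow> S (Suc m)) \<lesssim> S (Suc m)" .
  have S0: "S 0 \<lesssim> S (Suc m)" using IH(3) le by (rule lepoll_trans)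
  have "PiE {..<Suc (Suc m)} (\<lambda>l. (UNIV::nat set) \<rightarrow> S l) \<lesssim> PiE {..<Suc m} (\<lambda>l. (UNIV::nat set) \<rightarrow> S l) \<times> ((UNIV::nat set) \<rightarrow> S (Suc m))"
    by (rule PiE_Suc_lepoll)
  also have "\<dots> \<lesssim> S (Suc m) \<times> S (Suc m)"
    using lepoll_trans[OF IH(4) le] T by (rule times_lepoll_mono)
  also have "\<dots> \<approx> S (Suc m)" using inf by (rule sq_eqpoll)
  finally show ?case using inf T S0 by blast
qed

lemma enc_lemma:
  fixes S :: "nat \<Rightarrow> 'a set"
  assumes chi_inf: "infinite (S 0)"
    and chi_omega: "((UNIV :: nat set) \<rightarrow> S 0) \<approx> S 0"
    and beth: "\<forall>l<k. S (Suc l) \<approx> Pow (S l)"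
    and mk: "m \<le> k"
  shows "(PiE {..<m} (\<lambda>l. (UNIV::nat set) \<rightarrow> S l) \<rightarrow>\<^sub>E S 0) \<lesssim> S m"
proof (cases m)
  case 0
  have "(PiE {..<m} (\<lambda>l. (UNIV::nat set) \<rightarrow> S l) \<rightarrow>\<^sub>E S 0) = ({\<lambda>_. undefined} \<rightarrow>\<^sub>E S 0)"
    using 0 by simp
  also have "\<dots> \<approx> S 0" by (rule PiE_sing_eqpoll_self)
  finally show ?thesis using 0 eqpoll_imp_lepoll by simp
next
  case (Suc m')
  note I = inv_lemma[OF chi_inf chi_omega beth]
  have I': "infinite (S m')" "S 0 \<lesssim> S m'" "PiE {..<m} (\<lambda>l. (UNIV::nat set) \<rightarrow> S l) \<lesssim> S m'"
    using I[of m'] Suc mk by auto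
  have E: "Pow (S m') \<approx> S m" using beth Suc mk by (auto intro: eqpoll_sym)
  have "(PiE {..<m} (\<lambda>l. (UNIV::nat set) \<rightarrow> S l) \<rightarrow>\<^sub>E S 0) \<lesssim> Pow (PiE {..<m} (\<lambda>l. (UNIV::nat set) \<rightarrow> S l) \<times> S 0)"
    by (rule graph_lepoll)
  also have "\<dots> \<lesssim> Pow (S m' \<times> S m')"
    using I'(3,2) by (intro Pow_lepoll_mono times_lepoll_mono)
  also have "\<dots> \<lesssim> Pow (S m')"
    using I'(1) by (intro Pow_lepoll_mono eqpoll_imp_lepoll sq_eqpoll)
  also have "\<dots> \<approx> S m" by (rule E)
  finally show ?thesis .
qed


function co :: "(nat \<Rightarrow> 'a list \<Rightarrow> (nat \<Rightarrow> nat \<Rightarrow> 'a) \<Rightarrow> 'a) \<Rightarrow> (nat \<Rightarrow> 'a) \<Rightarrow> nat \<Rightarrow> nat \<Rightarrow> nat \<Rightarrow> 'a" where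
 "co H g k m i = (if i = 0 then g m else H m (map (\<lambda>j. co H g k m j) [0..<i-1]) (\<lambda>l. if m < l \<and> l \<le> k then (\<lambda>j. co H g k l j) else undefined))"
  by pat_completeness auto
termination by (relation "measures [\<lambda>(H,g,k,m,i). k - m, \<lambda>(H,g,k,m,i). i]") auto

declare co.simps[simp del]

lemma co_0: "co H g k m 0 = g m"
  by (subst co.simps) simp

lemma co_Suc: "co H g k m (Suc n) = H m (map (\<lambda>j. co H g k m j) [0..<n]) (\<lambda>l. if m < l \<and> l \<le> k then (\<lambda>j. co H g k l j) else undefined)"
  by (subst co.simps) simp

theorem claim2p1:
  fixes k :: nat and S :: "nat \<Rightarrow> 'a set"
  assumes chi_inf: "infinite (S 0)"
    and chi_omega: "((UNIV :: nat set) \<rightarrow> S 0) \<approx> S 0"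
    and beth: "\<forall>l<k. S (Suc l) \<approx> Pow (S l)"
  shows "\<exists>\<alpha> :: (nat \<Rightarrow> nat \<Rightarrow> 'a) \<Rightarrow> nat \<Rightarrow> nat \<Rightarrow> 'a.
           (\<forall>eta\<in>Lam k S. \<forall>m\<le>k. \<forall>n. \<alpha> eta m n \<in> S 0) \<and>
           (\<forall>h. h ` Lam_le k S \<subseteq> S 0 \<longrightarrow>
              (\<forall>\<gamma>. (\<forall>l\<le>k. \<gamma> l \<in> S l) \<longrightarrow>
                 (\<exists>eta\<in>Lam k S. (\<forall>l\<le>k. eta l 0 = \<gamma> l) \<and>
                    (\<forall>m\<le>k. \<forall>n. h (restr eta m n) = \<alpha> eta m n))))"
proof -
  obtain s0 where s0: "s0 \<in> S 0" using chi_inf by (metis finite.emptyI ex_in_conv)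
  define D where "D m = PiE {..<m} (\<lambda>l. (UNIV::nat set) \<rightarrow> S l)" for m
  have "\<forall>m. \<exists>e. m \<le> k \<longrightarrow> inj_on e (D m \<rightarrow>\<^sub>E S 0) \<and> e ` (D m \<rightarrow>\<^sub>E S 0) \<subseteq> S m"
  proof
    fix m show "\<exists>e. m \<le> k \<longrightarrow> inj_on e (D m \<rightarrow>\<^sub>E S 0) \<and> e ` (D m \<rightarrow>\<^sub>E S 0) \<subseteq> S m"
    proof (cases "m \<le> k")
      case True
      then show ?thesis using enc_lemma[OF chi_inf chi_omega beth True] unfolding D_def lepoll_def by blast
    qed simp
  qed
  then obtain enc where enc: "\<And>m. m \<le> k \<Longrightarrow> inj_on (enc m) (D m \<rightarrow>\<^sub>E S 0) \<and> enc m ` (D m \<rightarrow>\<^sub>E S 0) \<subseteq> S m"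
    by metis
  define \<alpha> :: "(nat \<Rightarrow> nat \<Rightarrow> 'a) \<Rightarrow> nat \<Rightarrow> nat \<Rightarrow> 'a" where
    "\<alpha> eta m n = (let v = inv_into (D m \<rightarrow>\<^sub>E S 0) (enc m) (eta m (Suc n)) (restrict eta {..<m}) in if v \<in> S 0 then v else s0)" for eta m n
  show ?thesis
  proof (intro exI[of _ \<alpha>] conjI allI impI ballI)
    fix eta m n show "\<alpha> eta m n \<in> S 0" using s0 by (simp add: \<alpha>_def Let_def)
  next
    fix h :: "nat \<times> 'a list \<times> (nat \<Rightarrow> nat \<Rightarrow> 'a) \<Rightarrow> 'a" and \<gamma> :: "nat \<Rightarrow> 'a"
    assume h: "h ` Lam_le k S \<subseteq> S 0" and \<gamma>: "\<forall>l\<le>k. \<gamma> l \<in> S l"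
    define H where "H m l u = enc m (\<lambda>d\<in>D m. let v = h (m, l, \<lambda>l'. if l' < m then d l' else u l') in if v \<in> S 0 then v else s0)"
      for m l and u :: "nat \<Rightarrow> nat \<Rightarrow> 'a"
    define eta where "eta l = (if l \<le> k then (\<lambda>i. co H \<gamma> k l i) else undefined)" for l
    have Fin: "(\<lambda>d\<in>D m. let v = h (m, l, \<lambda>l'. if l' < m then d l' else u l') in if v \<in> S 0 then v else s0) \<in> D m \<rightarrow>\<^sub>E S 0"
      for m l and u :: "nat \<Rightarrow> nat \<Rightarrow> 'a"
      using s0 by (auto simp: Let_def)
    have Hin: "H m l u \<in> S m" if "m \<le> k" for m l u
      using enc[OF that] Fin[of m l u] unfolding H_def by blast
    have coS: "co H \<gamma> k m i \<in> S m" if "m \<le> k" for m i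
    proof (cases i)
      case 0 then show ?thesis using \<gamma> that by (simp add: co_0)
    next
      case (Suc n) then show ?thesis using Hin[OF that] by (simp add: co_Suc)
    qed
    have etaL: "eta \<in> Lam k S"
      unfolding Lam_def
    proof (rule PiE_I)
      fix l assume "l \<in> {..k}" then show "eta l \<in> UNIV \<rightarrow> S l" using coS by (simp add: eta_def)
    next
      fix l assume "l \<notin> {..k}" then show "eta l = undefined" by (simp add: eta_def)
    qed
    show "\<exists>eta\<in>Lam k S. (\<forall>l\<le>k. eta l 0 = \<gamma> l) \<and> (\<forall>m\<le>k. \<forall>n. h (restr eta m n) = \<alpha> eta m n)"
    proof (intro bexI[OF _ etaL] conjI allI impI)
      fix l assume "l \<le> k" then show "eta l 0 = \<gamma> l" by (simp add: eta_def co_0)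
    next
      fix m n assume mk: "m \<le> k"
      define U where "U = (\<lambda>l. if m < l \<and> l \<le> k then (\<lambda>j. co H \<gamma> k l j) else undefined)"
      define L where "L = map (\<lambda>j. co H \<gamma> k m j) [0..<n]"
      define F where "F = (\<lambda>d\<in>D m. let v = h (m, L, \<lambda>l'. if l' < m then d l' else U l') in if v \<in> S 0 then v else s0)"
      have e1: "eta m (Suc n) = enc m F"
        unfolding F_def L_def U_def using mk by (simp add: eta_def co_Suc H_def)
      have e2: "inv_into (D m \<rightarrow>\<^sub>E S 0) (enc m) (enc m F) = F"
        using enc[OF mk] Fin[of m L U] unfolding F_def by (simp add: inv_into_f_f)
      have dD: "restrict eta {..<m} \<in> D m"
        using etaL mk unfolding D_def Lam_def by (auto simp: PiE_iff)
      have e3: "(\<lambda>l'. if l' < m then restrict eta {..<m} l' else U l') = eta(m := undefined)"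
        by (auto simp: fun_eq_iff U_def eta_def)
      have e4: "L = map (eta m) [0..<n]" using mk by (simp add: L_def eta_def)
      have r: "restr eta m n = (m, L, \<lambda>l'. if l' < m then restrict eta {..<m} l' else U l')"
        unfolding restr_def e3 e4 ..
      have "restr eta m n \<in> Lam_le k S" unfolding Lam_le_def using etaL mk by blast
      then have hin: "h (restr eta m n) \<in> S 0" using h by blast
      have "\<alpha> eta m n = F (restrict eta {..<m})" 
        using e1 e2 hin dD by (simp add: \<alpha>_def F_def Let_def r[symmetric])
      also have "\<dots> = h (restr eta m n)" using hin dD by (simp add: F_def Let_def r[symmetric])
      finally show "h (restr eta m n) = \<alpha> eta m n" by simp
    qed
  qed
qed

end
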